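(* Let $\mathcal{B}$ be a prime Banach algebra over $\mathbb{R}$ or $\mathbb{C}$, and let $\mathcal{H}_1,\mathcal{H}_2$ be non-empty open subsets of $\mathcal{B}$. Suppose $\mathcal{B}$ admits a continuous generalized derivation $F$ associated with a derivation $d$ that is not injective, such that for every $(x,y)\in\mathcal{H}_1\times\mathcal{H}_2$ there exist positive integers $p=p(x,y)$, $q=q(x,y)$ with $$F(x^{p}y^{q})+x^{p}\circ y^{q}\in Z(\mathcal{B}).$$ Then $\mathcal{B}$ is commutative or $d(Z(\mathcal{B}))=\{0\}$.
   Context: $Z(\mathcal{B})$ denotes the center of $\mathcal{B}$. For $x,y\in\mathcal{B}$, $x\circ y=xy+yx$ and $[x,y]=xy-yx$. $\mathcal{B}$ is prime if $x\mathcal{B}y=\{0\}$ implies $x=0$ or $y=0$. A derivation is an additive map $d:\mathcal{B}\to\mathcal{B}$ with $d(xy)=d(x)y+xd(y)$ for all $x,y$. A generalized derivation associated with the derivation $d$ is an additive map $F:\mathcal{B}\to\mathcal{B}$ with $F(xy)=F(x)y+xd(y)$ for all $x,y\in\mathcal{B}$. *)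

theory Defs
  imports "HOL-Analysis.Analysis"
begin

definition center :: "'a::ring set" where
  "center = {z. \<forall>x. z * x = x * z}"

definition jordan_prod :: "'a::ring \<Rightarrow> 'a \<Rightarrow> 'a" (infixl "\<circ>\<^sub>J" 70) where
  "x \<circ>\<^sub>J y = x * y + y * x"

definition prime_ring :: "'a::ring itself \<Rightarrow> bool" where
  "prime_ring _ \<longleftrightarrow> (\<forall>x y::'a. (\<forall>r. x * r * y = 0) \<longrightarrow> x = 0 \<or> y = 0)"

definition is_derivation :: "('a::ring \<Rightarrow> 'a) \<Rightarrow> bool" where
  "is_derivation d \<longleftrightarrow> (\<forall>x y. d (x + y) = d x + d y) \<and>
                          (\<forall>x y. d (x * y) = d x * y + x * d y)"

definition is_gen_derivation :: "('a::ring \<Rightarrow> 'a) \<Rightarrow> ('a \<Rightarrow> 'a) \<Rightarrow> bool" where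
  "is_gen_derivation F d \<longleftrightarrow> is_derivation d \<and> (\<forall>x y. F (x + y) = F x + F y) \<and>
                          (\<forall>x y. F (x * y) = F x * y + x * d y)"

text \<open>Positive powers in a possibly non-unital ring: ppow x n = x^(n+1).\<close>
primrec ppow :: "'a::ring \<Rightarrow> nat \<Rightarrow> 'a" where
  "ppow x 0 = x"
| "ppow x (Suc n) = x * ppow x n"

end

theory Submission
  imports Defs "HOL-Analysis.Cartesian_Euclidean_Space"
begin

primrec mp :: "'a::ring \<Rightarrow> nat \<Rightarrow> 'a \<Rightarrow> 'a" where
  "mp c 0 y = y"
| "mp c (Suc n) y = c * mp c n y"

lemma center_iff: "z \<in> center \<longleftrightarrow> (\<forall>x. z * x = x * z)"
  by (simp add: center_def)

lemma ppow_center: "c \<in> center \<Longrightarrow> ppow c n \<in> center"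
proof (induction n)
  case 0 then show ?case by simp
next
  case (Suc n)
  have "ppow c (Suc n) * x = x * ppow c (Suc n)" for x
  proof -
    have "ppow c (Suc n) * x = c * (ppow c n * x)" by (simp add: mult.assoc)
    also have "\<dots> = c * (x * ppow c n)" using Suc by (simp add: center_def)
    also have "\<dots> = (c * x) * ppow c n" by (simp add: mult.assoc)
    also have "\<dots> = (x * c) * ppow c n" using Suc by (simp add: center_def)
    also have "\<dots> = x * ppow c (Suc n)" by (simp add: mult.assoc)
    finally show ?thesis .
  qed
  then show ?case by (simp add: center_def)
qed

lemma ppow_mp: "c \<in> center \<Longrightarrow> ppow c n * y = mp c (Suc n) y"
  by (induction n) (simp_all add: mult.assoc)


lemma ppow_expand:
  fixes a b :: "'a::real_normed_algebra"
  shows "\<exists>C. C 0 = ppow a n \<and> C (Suc n) = ppow b n \<and>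
     (a \<in> center \<longrightarrow> C 1 = of_nat (Suc n) *\<^sub>R mp a n b) \<and>
     (\<forall>t. ppow (a + t *\<^sub>R b) n = (\<Sum>k\<le>Suc n. t^k *\<^sub>R C k))"
proof (induction n)
  case 0
  show ?case
    by (rule exI[of _ "\<lambda>k. if k = 0 then a else if k = 1 then b else 0"]) simp
next
  case (Suc n)
  then obtain C where C0: "C 0 = ppow a n" and CS: "C (Suc n) = ppow b n"
    and C1: "a \<in> center \<longrightarrow> C 1 = of_nat (Suc n) *\<^sub>R mp a n b"
    and Ce: "\<And>t. ppow (a + t *\<^sub>R b) n = (\<Sum>k\<le>Suc n. t^k *\<^sub>R C k)" by blast
  define D where "D k = (if k \<le> Suc n then a * C k else 0) + (if k = 0 then 0 else b * C (k - 1))" for k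
  have "ppow (a + t *\<^sub>R b) (Suc n) = (\<Sum>k\<le>Suc (Suc n). t^k *\<^sub>R D k)" for t
  proof -
    have "ppow (a + t *\<^sub>R b) (Suc n) = (a + t *\<^sub>R b) * (\<Sum>k\<le>Suc n. t^k *\<^sub>R C k)"
      using Ce by simp
    also have "\<dots> = (\<Sum>k\<le>Suc n. t^k *\<^sub>R (a * C k)) + (\<Sum>k\<le>Suc n. t^(Suc k) *\<^sub>R (b * C k))"
      by (simp only: distrib_right sum_distrib_left mult_scaleR_right mult_scaleR_left scaleR_sum_right scaleR_scaleR power_Suc)
         (simp add: sum.distrib scaleR_right_distrib scaleR_scaleR mult.commute mult.left_commute)
    also have "(\<Sum>k\<le>Suc n. t^k *\<^sub>R (a * C k)) = (\<Sum>k\<le>Suc (Suc n). t^k *\<^sub>R (if k \<le> Suc n then a * C k else 0))"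
      by simp
    also have "(\<Sum>k\<le>Suc n. t^(Suc k) *\<^sub>R (b * C k)) = (\<Sum>k\<le>Suc (Suc n). t^k *\<^sub>R (if k = 0 then 0 else b * C (k - 1)))"
      by (subst sum.atMost_Suc_shift) simp
    finally show ?thesis
      by (simp add: D_def scaleR_right_distrib sum.distrib)
  qed
  then have E4: "\<forall>t. ppow (a + t *\<^sub>R b) (Suc n) = (\<Sum>k\<le>Suc (Suc n). t^k *\<^sub>R D k)" by blast
  moreover have "D 0 = ppow a (Suc n)" using C0 by (simp add: D_def)
  moreover have "D (Suc (Suc n)) = ppow b (Suc n)" using CS by (simp add: D_def)
  moreover have "a \<in> center \<longrightarrow> D 1 = of_nat (Suc (Suc n)) *\<^sub>R mp a (Suc n) b"
  proof
    assume a: "a \<in> center"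
    have "b * ppow a n = ppow a n * b" using ppow_center[OF a] by (simp add: center_def)
    also have "\<dots> = mp a (Suc n) b" using ppow_mp[OF a] .
    finally have "b * C 0 = mp a (Suc n) b" using C0 by simp
    have "D 1 = a * C 1 + b * C 0" by (simp add: D_def)
    also have "\<dots> = of_nat (Suc n) *\<^sub>R mp a (Suc n) b + mp a (Suc n) b"
      using C1 a \<open>b * C 0 = mp a (Suc n) b\<close> by (simp add: mult_scaleR_right)
    also have "\<dots> = of_nat (Suc (Suc n)) *\<^sub>R mp a (Suc n) b"
    proof -
      have e: "real (Suc (Suc n)) = real (Suc n) + 1" by simp
      show ?thesis by (simp only: e scaleR_add_left scaleR_one)
    qed
    finally show "D 1 = of_nat (Suc (Suc n)) *\<^sub>R mp a (Suc n) b" .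
  qed
  ultimately show ?case
    apply -
    apply (rule exI[of _ D])
    apply (intro conjI)
    by assumption+
qed

lemma coeff_zero:
  fixes C :: "nat \<Rightarrow> 'a::real_normed_vector"
  assumes "e > 0" "\<forall>t. \<bar>t\<bar> < e \<longrightarrow> (\<Sum>k\<le>n. t^k *\<^sub>R C k) = 0"
  shows "\<forall>k\<le>n. C k = 0"
  using assms(2)
proof (induction n arbitrary: C)
  case 0
  then have "(\<Sum>k\<le>0. (0::real)^k *\<^sub>R C k) = 0" using assms(1) by (metis abs_zero)
  then show ?case by simp
next
  case (Suc n)
  have "(\<Sum>k\<le>Suc n. (0::real)^k *\<^sub>R C k) = 0" using Suc.prems assms(1) by (metis abs_zero)
  moreover have "(\<Sum>k\<le>Suc n. (0::real)^k *\<^sub>R C k) = C 0" by (simp only: sum.atMost_Suc_shift) simp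
  ultimately have C0: "C 0 = 0" by simp
  define g where "g t = (\<Sum>k\<le>n. t^k *\<^sub>R C (Suc k))" for t
  have split: "(\<Sum>k\<le>Suc n. t^k *\<^sub>R C k) = t *\<^sub>R g t" for t
    by (simp only: sum.atMost_Suc_shift g_def C0 scaleR_sum_right scaleR_scaleR power_Suc) simp
  have g0: "g t = 0" if "t \<noteq> 0" "\<bar>t\<bar> < e" for t
    using Suc.prems that split[of t] by auto
  have cont: "isCont g 0" unfolding g_def by (intro continuous_intros)
  have ev: "eventually (\<lambda>t. g t = 0) (at (0::real))"
    unfolding eventually_at using assms(1) g0 by (intro exI[of _ e]) auto
  have "(g \<longlongrightarrow> 0) (at 0)" using ev by (rule tendsto_eventually)
  moreover have "(g \<longlongrightarrow> g 0) (at 0)" using cont by (simp add: isCont_def)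
  ultimately have "g 0 = 0" using tendsto_unique[OF trivial_limit_at] by metis
  then have "\<forall>t. \<bar>t\<bar> < e \<longrightarrow> g t = 0" using g0 by metis
  then have "\<forall>k\<le>n. C (Suc k) = 0" using Suc.IH[of "\<lambda>k. C (Suc k)"] unfolding g_def by blast
  then show ?case using C0 by (metis Suc_le_mono not0_implies_Suc)
qed

lemma additive_cont_linear:
  fixes F :: "'a::real_normed_vector \<Rightarrow> 'b::real_normed_vector"
  assumes add: "\<forall>x y. F (x + y) = F x + F y" and cont: "continuous_on UNIV F"
  shows "linear F"
proof -
  have F0: "F 0 = 0" using add[rule_format, of 0 0] by simp
  have Fm: "F (- x) = - F x" for x
    using add[rule_format, of x "-x"] F0 by (simp add: eq_neg_iff_add_eq_0 add.commute)
  have Fn: "F (of_nat n *\<^sub>R x) = of_nat n *\<^sub>R F x" for n x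
    by (induction n) (simp_all add: F0 add scaleR_add_left)
  have Fi: "F (of_int i *\<^sub>R x) = of_int i *\<^sub>R F x" for i x
  proof (cases "i \<ge> 0")
    case True
    then have "i = int (nat i)" by simp
    then show ?thesis using Fn[of "nat i" x] by (metis of_int_of_nat_eq)
  next
    case False
    then have "i = - int (nat (-i))" by simp
    then have "of_int i *\<^sub>R x = - (of_nat (nat (-i)) *\<^sub>R x)" by (metis of_int_minus of_int_of_nat_eq scaleR_minus_left)
    moreover have "of_int i *\<^sub>R F x = - (of_nat (nat (-i)) *\<^sub>R F x)" using \<open>i = - int (nat (-i))\<close>
      by (metis of_int_minus of_int_of_nat_eq scaleR_minus_left)
    ultimately show ?thesis using Fn Fm by simp
  qed
  have Fq: "F (r *\<^sub>R x) = r *\<^sub>R F x" if rq: "r \<in> \<rat>" for r x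
  proof -
    obtain a b where b: "b > 0" and r: "r = of_int a / of_int b" using Rats_cases'[OF rq] by metis
    have "of_int b *\<^sub>R (r *\<^sub>R x) = of_int a *\<^sub>R x" using b r by simp
    then have "of_int b *\<^sub>R F (r *\<^sub>R x) = of_int a *\<^sub>R F x" using Fi by metis
    then have "(1 / of_int b) *\<^sub>R (of_int b *\<^sub>R F (r *\<^sub>R x)) = (1 / of_int b) *\<^sub>R (of_int a *\<^sub>R F x)" by simp
    then show ?thesis using b r by simp
  qed
  have Fr: "F (r *\<^sub>R x) = r *\<^sub>R F x" for r x
  proof -
    have cl: "closed {r. F (r *\<^sub>R x) = r *\<^sub>R F x}"
    proof (rule closed_Collect_eq)
      show "continuous_on UNIV (\<lambda>r. F (r *\<^sub>R x))"
        by (rule continuous_on_compose2[OF cont]) (auto intro!: continuous_intros)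
      show "continuous_on UNIV (\<lambda>r. r *\<^sub>R F x)" by (intro continuous_intros)
    qed
    have "\<rat> \<subseteq> {r. F (r *\<^sub>R x) = r *\<^sub>R F x}" using Fq by blast
    then have "closure \<rat> \<subseteq> {r. F (r *\<^sub>R x) = r *\<^sub>R F x}" using cl by (rule closure_minimal)
    then show ?thesis using Rats_closure_real by blast
  qed
  show ?thesis by (rule linearI) (simp_all add: add Fr)
qed


lemma coeffs_center:
  fixes C :: "nat \<Rightarrow> 'a::real_normed_algebra"
  assumes "e > 0" "\<forall>t. \<bar>t\<bar> < e \<longrightarrow> (\<Sum>k\<le>N. t^k *\<^sub>R C k) \<in> center"
  shows "\<forall>k\<le>N. C k \<in> center"
proof -
  have "C k * w = w * C k" if "k \<le> N" for k w
  proof -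
    have "\<forall>t. \<bar>t\<bar> < e \<longrightarrow> (\<Sum>k\<le>N. t^k *\<^sub>R (C k * w - w * C k)) = 0"
    proof (intro allI impI)
      fix t :: real assume "\<bar>t\<bar> < e"
      then have c: "(\<Sum>k\<le>N. t^k *\<^sub>R C k) * w = w * (\<Sum>k\<le>N. t^k *\<^sub>R C k)"
        using assms(2) by (simp add: center_def)
      have "(\<Sum>k\<le>N. t^k *\<^sub>R (C k * w - w * C k)) = (\<Sum>k\<le>N. t^k *\<^sub>R C k) * w - w * (\<Sum>k\<le>N. t^k *\<^sub>R C k)"
        by (simp add: sum_distrib_left sum_distrib_right mult_scaleR_left mult_scaleR_right
            scaleR_diff_right sum_subtractf)
      then show "(\<Sum>k\<le>N. t^k *\<^sub>R (C k * w - w * C k)) = 0" using c by simp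
    qed
    from coeff_zero[OF assms(1) this] that show ?thesis by simp
  qed
  then show ?thesis by (simp add: center_def)
qed

lemma poly_center:
  fixes L :: "'a::real_normed_algebra \<Rightarrow> 'a"
  assumes L: "linear L" and e: "e > 0"
    and h: "\<forall>t. \<bar>t\<bar> < e \<longrightarrow> L (ppow (a + t *\<^sub>R b) n) \<in> center"
  shows "L (ppow b n) \<in> center"
proof -
  interpret L: linear L by (rule L)
  obtain C where CS: "C (Suc n) = ppow b n" and Ce: "\<And>t. ppow (a + t *\<^sub>R b) n = (\<Sum>k\<le>Suc n. t^k *\<^sub>R C k)"
    using ppow_expand[of a n b] by blast
  have "\<forall>t. \<bar>t\<bar> < e \<longrightarrow> (\<Sum>k\<le>Suc n. t^k *\<^sub>R L (C k)) \<in> center"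
  proof (intro allI impI)
    fix t :: real assume t: "\<bar>t\<bar> < e"
    have eq: "L (ppow (a + t *\<^sub>R b) n) = (\<Sum>k\<le>Suc n. t^k *\<^sub>R L (C k))"
      unfolding Ce by (simp only: L.sum L.scale)
    show "(\<Sum>k\<le>Suc n. t^k *\<^sub>R L (C k)) \<in> center" using h t eq by metis
  qed
  from coeffs_center[OF e this] CS show ?thesis by (metis order_refl)
qed


lemma center_mult: "a \<in> center \<Longrightarrow> b \<in> center \<Longrightarrow> a * b \<in> center"
proof -
  assume a: "a \<in> center" and b: "b \<in> center"
  have "a * b * x = x * (a * b)" for x
  proof -
    have "a * b * x = a * (x * b)" using b by (simp add: center_def mult.assoc)
    also have "\<dots> = (a * x) * b" by (simp add: mult.assoc)
    also have "\<dots> = x * (a * b)" using a by (simp add: center_def mult.assoc)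
    finally show ?thesis .
  qed
  then show ?thesis by (simp add: center_def)
qed

lemma center_diff: "a \<in> center \<Longrightarrow> b \<in> center \<Longrightarrow> a - b \<in> center"
  by (simp add: center_def algebra_simps)

lemma center_uminus: "a \<in> center \<Longrightarrow> - a \<in> center"
  by (simp add: center_def)

lemma center_zero: "0 \<in> center"
  by (simp add: center_def)

lemma center_scaleR:
  fixes a :: "'a::real_algebra"
  shows "a \<in> center \<Longrightarrow> r *\<^sub>R a \<in> center"
  by (simp add: center_def mult_scaleR_left mult_scaleR_right)

lemma prime_nzd:
  assumes P: "prime_ring TYPE('a::ring)" and c: "(c::'a) \<in> center" "c \<noteq> 0" and ca: "c * a = 0"
  shows "a = 0"
proof -
  have "\<forall>r. c * r * a = 0"
  proof
    fix r
    have "c * r * a = r * c * a" using c by (simp add: center_def)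
    also have "\<dots> = r * (c * a)" by (simp add: mult.assoc)
    finally show "c * r * a = 0" using ca by simp
  qed
  then show ?thesis using P c unfolding prime_ring_def by blast
qed

lemma central_nil:
  assumes P: "prime_ring TYPE('a::ring)" and z: "(z::'a) \<in> center"
  shows "ppow z k = 0 \<Longrightarrow> z = 0"
proof (induction k)
  case 0 then show ?case by simp
next
  case (Suc k)
  show ?case
  proof (rule ccontr)
    assume "z \<noteq> 0"
    then have "ppow z k = 0" using prime_nzd[OF P z] Suc.prems by simp
    then show False using Suc.IH \<open>z \<noteq> 0\<close> by simp
  qed
qed

lemma cent_cancel:
  assumes P: "prime_ring TYPE('a::ring)" and c: "(c::'a) \<in> center" "c \<noteq> 0" and cy: "c * y \<in> center"
  shows "y \<in> center"
proof -
  have "y * w = w * y" for w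
  proof -
    have "c * (y * w) = (c * y) * w" by (simp add: mult.assoc)
    also have "\<dots> = w * (c * y)" using cy by (simp add: center_def)
    also have "\<dots> = (w * c) * y" by (simp add: mult.assoc)
    also have "\<dots> = c * (w * y)" using c by (simp add: center_def mult.assoc)
    finally have "c * (y * w - w * y) = 0" by (simp add: right_diff_distrib)
    then have "y * w - w * y = 0" by (rule prime_nzd[OF P c])
    then show ?thesis by simp
  qed
  then show ?thesis by (simp add: center_def)
qed

lemma ppow_sq_center:
  assumes z: "z \<in> center"
  shows "ppow (z * z) l = ppow z l * ppow z l"
proof (induction l)
  case 0 then show ?case by simp
next
  case (Suc l)
  have c: "ppow z l * z = z * ppow z l" using z by (simp add: center_def)
  have "ppow (z * z) (Suc l) = z * (z * ppow z l) * ppow z l" using Suc by (simp add: mult.assoc)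
  also have "\<dots> = z * (ppow z l * z) * ppow z l" using c by simp
  also have "\<dots> = ppow z (Suc l) * ppow z (Suc l)" by (simp add: mult.assoc)
  finally show ?case .
qed

lemma ppow_cont:
  fixes f :: "'b::topological_space \<Rightarrow> 'a::real_normed_algebra"
  shows "continuous_on S f \<Longrightarrow> continuous_on S (\<lambda>x. ppow (f x) n)"
  by (induction n) (auto intro!: continuous_intros)

lemma deriv_facts:
  fixes d :: "'a::real_algebra \<Rightarrow> 'a"
  assumes "is_derivation d"
  shows "d 0 = 0" and "z \<in> center \<Longrightarrow> d z \<in> center"
    and "z \<in> center \<Longrightarrow> d (ppow z l) = of_nat (Suc l) *\<^sub>R mp z l (d z)"
proof -
  have add: "\<And>x y. d (x + y) = d x + d y" and mul: "\<And>x y. d (x * y) = d x * y + x * d y"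
    using assms by (auto simp: is_derivation_def)
  show d0: "d 0 = 0" using add[of 0 0] by simp
  show dc: "d z \<in> center" if z: "z \<in> center" for z :: 'a
  proof -
    have "d z * x = x * d z" for x
    proof -
      have "d (z * x) = d (x * z)" using z by (simp add: center_def)
      then have "d z * x + z * d x = d x * z + x * d z" by (simp add: mul)
      moreover have "z * d x = d x * z" using z by (simp add: center_def)
      ultimately show ?thesis by simp
    qed
    then show ?thesis by (simp add: center_def)
  qed
  show "d (ppow z l) = of_nat (Suc l) *\<^sub>R mp z l (d z)" if z: "z \<in> center"
  proof (induction l)
    case 0 then show ?case by simp
  next
    case (Suc l)
    have "d (ppow z (Suc l)) = d z * ppow z l + z * d (ppow z l)" by (simp add: mul)
    also have "d z * ppow z l = ppow z l * d z" using ppow_center[OF z] by (simp add: center_def)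
    also have "\<dots> = mp z (Suc l) (d z)" using ppow_mp[OF z] .
    also have "z * d (ppow z l) = of_nat (Suc l) *\<^sub>R mp z (Suc l) (d z)"
      using Suc by (simp add: mult_scaleR_right)
    also have "mp z (Suc l) (d z) + of_nat (Suc l) *\<^sub>R mp z (Suc l) (d z) = of_nat (Suc (Suc l)) *\<^sub>R mp z (Suc l) (d z)"
    proof -
      have e: "real (Suc (Suc l)) = 1 + real (Suc l)" by simp
      show ?thesis by (simp only: e scaleR_add_left scaleR_one)
    qed
    finally show ?case .
  qed
qed


theorem theorem3p1:
  fixes F d :: "'a::{real_normed_algebra, banach} \<Rightarrow> 'a"
    and H1 H2 :: "'a set"
  assumes "prime_ring TYPE('a)"
    and "open H1" "H1 \<noteq> {}" "open H2" "H2 \<noteq> {}"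
    and "is_gen_derivation F d"
    and "continuous_on UNIV F"
    and "\<not> inj d"
    and "\<forall>x\<in>H1. \<forall>y\<in>H2. \<exists>p q::nat. p > 0 \<and> q > 0 \<and>
           F (ppow x (p - 1) * ppow y (q - 1)) + (ppow x (p - 1)) \<circ>\<^sub>J (ppow y (q - 1)) \<in> center"
  shows "(\<forall>x y::'a. x * y = y * x) \<or> d ` center = {0}"
proof -
  note P = assms(1)
  have Fadd: "\<forall>x y. F (x + y) = F x + F y" and Fmul: "\<And>x y. F (x * y) = F x * y + x * d y"
    and dder: "is_derivation d"
    using assms(6) by (auto simp: is_gen_derivation_def)
  have dmul: "\<And>x y. d (x * y) = d x * y + x * d y" using dder by (auto simp: is_derivation_def)
  have Flin: "linear F" using additive_cont_linear[OF Fadd assms(7)] .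
  interpret FL: linear F by (rule Flin)
  define E where "E m l x y = F (ppow x m * ppow y l) + ppow x m \<circ>\<^sub>J ppow y l" for m l and x y :: 'a
  have hyp: "\<exists>m l. E m l x y \<in> center" if xy: "x \<in> H1" "y \<in> H2" for x y
  proof -
    obtain p q :: nat where "F (ppow x (p - 1) * ppow y (q - 1)) + (ppow x (p - 1)) \<circ>\<^sub>J (ppow y (q - 1)) \<in> center"
      using assms(9) xy by blast
    then have "E (p - 1) (q - 1) x y \<in> center" by (simp add: E_def)
    then show ?thesis by blast
  qed
  define G where "G m l = {w::'a\<times>'a. \<forall>u. E m l (fst w) (snd w) * u = u * E m l (fst w) (snd w)}" for m l
  have Gcl: "closed (G m l)" for m l
  proof -
    have ce: "continuous_on UNIV (\<lambda>w::'a\<times>'a. E m l (fst w) (snd w))"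
      unfolding E_def jordan_prod_def
      by (intro continuous_intros continuous_on_compose2[OF assms(7)] ppow_cont) auto
    show ?thesis unfolding G_def
      by (intro closed_Collect_all closed_Collect_eq continuous_intros ce)
  qed
  have cover: "H1 \<times> H2 \<subseteq> \<Union> (range (\<lambda>(m,l). G m l))"
  proof
    fix w assume "w \<in> H1 \<times> H2"
    then obtain m l where "E m l (fst w) (snd w) \<in> center" using hyp by (cases w) force
    then have "w \<in> G m l" by (simp add: G_def center_def)
    then show "w \<in> \<Union> (range (\<lambda>(m,l). G m l))" by blast
  qed
  have "\<exists>m l. interior (G m l) \<noteq> {}"
  proof (rule ccontr)
    assume "\<not> ?thesis"
    then have all: "\<And>T. T \<in> range (\<lambda>(m,l). G m l) \<Longrightarrow> closedin euclidean T \<and> euclidean interior_of T = {}"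
      using Gcl closed_closedin by auto
    have "euclidean interior_of \<Union> (range (\<lambda>(m,l). G m l)) = {}"
      by (rule Baire_category_alt) (use all completely_metrizable_space_euclidean in auto)
    then have "interior (\<Union> (range (\<lambda>(m,l). G m l))) = {}" by simp
    moreover have "H1 \<times> H2 \<subseteq> interior (\<Union> (range (\<lambda>(m,l). G m l)))"
      using cover open_Times[OF assms(2,4)] by (rule interior_maximal)
    moreover have "H1 \<times> H2 \<noteq> {}" using assms(3,5) by simp
    ultimately show False by blast
  qed
  then obtain m l w0 where "w0 \<in> interior (G m l)" by blast
  then obtain r where r: "r > 0" "ball w0 r \<subseteq> G m l" using mem_interior by blast
  obtain x0 y0 where w0: "w0 = (x0, y0)" by (cases w0)
  have loc: "E m l x y \<in> center" if "dist x x0 < r/2" "dist y y0 < r/2" for x y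
  proof -
    have "dist (x, y) (x0, y0) = norm (x - x0, y - y0)" by (simp add: dist_norm)
    also have "\<dots> \<le> norm (x - x0) + norm (y - y0)" by (rule norm_Pair_le)
    also have "\<dots> < r" using that by (simp add: dist_norm)
    finally have "(x, y) \<in> ball w0 r" using w0 by (simp add: dist_commute)
    then have "(x, y) \<in> G m l" using r by blast
    then show ?thesis by (simp add: G_def center_def)
  qed
  have step1: "E m l x y \<in> center" if y: "dist y y0 < r/2" for x y
  proof -
    define L where "L X = F (X * ppow y l) + X \<circ>\<^sub>J ppow y l" for X
    have Llin: "linear L"
    proof (rule linearI)
      show "L (b1 + b2) = L b1 + L b2" for b1 b2
        by (simp add: L_def jordan_prod_def distrib_right distrib_left FL.add algebra_simps)
      show "L (c *\<^sub>R b) = c *\<^sub>R L b" for c b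
        by (simp add: L_def jordan_prod_def mult_scaleR_left mult_scaleR_right FL.scale scaleR_right_distrib)
    qed
    define e where "e = (r/2) / (norm x + 1)"
    have nx: "norm x + 1 > 0" using norm_ge_zero[of x] by linarith
    have e: "e > 0" using r(1) nx unfolding e_def by (intro divide_pos_pos) auto
    have "\<forall>t. \<bar>t\<bar> < e \<longrightarrow> L (ppow (x0 + t *\<^sub>R x) m) \<in> center"
    proof (intro allI impI)
      fix t :: real assume t: "\<bar>t\<bar> < e"
      have "\<bar>t\<bar> * norm x \<le> \<bar>t\<bar> * (norm x + 1)" by (simp add: mult_left_mono)
      also have "\<dots> < e * (norm x + 1)" using t nx by (intro mult_strict_right_mono) auto
      also have "\<dots> = r/2" using nx unfolding e_def by (simp add: field_simps)
      finally have "dist (x0 + t *\<^sub>R x) x0 < r/2" by (simp add: dist_norm)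
      from loc[OF this y] show "L (ppow (x0 + t *\<^sub>R x) m) \<in> center" by (simp add: L_def E_def)
    qed
    from poly_center[OF Llin e this] show ?thesis by (simp add: L_def E_def)
  qed
  have step2: "E m l x y \<in> center" for x y
  proof -
    define L where "L Y = F (ppow x m * Y) + ppow x m \<circ>\<^sub>J Y" for Y
    have Llin: "linear L"
    proof (rule linearI)
      show "L (b1 + b2) = L b1 + L b2" for b1 b2
        by (simp add: L_def jordan_prod_def distrib_right distrib_left FL.add algebra_simps)
      show "L (c *\<^sub>R b) = c *\<^sub>R L b" for c b
        by (simp add: L_def jordan_prod_def mult_scaleR_left mult_scaleR_right FL.scale scaleR_right_distrib)
    qed
    define e where "e = (r/2) / (norm y + 1)"
    have nx: "norm y + 1 > 0" using norm_ge_zero[of y] by linarith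
    have e: "e > 0" using r(1) nx unfolding e_def by (intro divide_pos_pos) auto
    have "\<forall>t. \<bar>t\<bar> < e \<longrightarrow> L (ppow (y0 + t *\<^sub>R y) l) \<in> center"
    proof (intro allI impI)
      fix t :: real assume t: "\<bar>t\<bar> < e"
      have "\<bar>t\<bar> * norm y \<le> \<bar>t\<bar> * (norm y + 1)" by (simp add: mult_left_mono)
      also have "\<dots> < e * (norm y + 1)" using t nx by (intro mult_strict_right_mono) auto
      also have "\<dots> = r/2" using nx unfolding e_def by (simp add: field_simps)
      finally have "dist (y0 + t *\<^sub>R y) y0 < r/2" by (simp add: dist_norm)
      from step1[OF this] show "L (ppow (y0 + t *\<^sub>R y) l) \<in> center" by (simp add: L_def E_def)
    qed
    from poly_center[OF Llin e this] show ?thesis by (simp add: L_def E_def)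
  qed
  show ?thesis
  proof (cases "\<forall>z\<in>center. d z = 0")
    case True
    have "d 0 = 0" using deriv_facts(1)[OF dder] .
    then have "d ` center = {0}" using True center_zero by force
    then show ?thesis by simp
  next
    case False
    then obtain z where z: "z \<in> center" "d z \<noteq> 0" by blast
    have dz0: "z \<noteq> 0" using z deriv_facts(1)[OF dder] by auto
    define v where "v = ppow z l"
    have vc: "v \<in> center" using ppow_center[OF z(1)] by (simp add: v_def)
    have dvc: "d v \<in> center" using deriv_facts(2)[OF dder vc] .
    define c where "c = v * d v"
    have cc: "c \<in> center" using center_mult[OF vc dvc] by (simp add: c_def)
    have cnz: "c \<noteq> 0"
    proof
      assume c0: "c = 0"
      show False
      proof (cases "v = 0")
        case True
        then show False using central_nil[OF P z(1)] dz0 by (simp add: v_def)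
      next
        case False
        have "d v = 0" using prime_nzd[OF P vc False] c0 by (simp add: c_def)
        then have "of_nat (Suc l) *\<^sub>R mp z l (d z) = 0"
          using deriv_facts(3)[OF dder z(1)] by (simp add: v_def)
        then have mz: "mp z l (d z) = 0" by simp
        show False
        proof (cases l)
          case 0 then show False using mz z(2) by simp
        next
          case (Suc k)
          then have pk: "ppow z k * d z = 0" using mz ppow_mp[OF z(1)] by simp
          have "ppow z k \<noteq> 0" using central_nil[OF P z(1)] dz0 by blast
          then have "d z = 0" using prime_nzd[OF P ppow_center[OF z(1)] _ pk] by blast
          then show False using z(2) by simp
        qed
      qed
    qed
    have key: "ppow x m * c \<in> center" for x :: 'a
    proof -
      define X where "X = ppow x m"
      have E1: "E m l x z \<in> center" and E2: "E m l x (z * z) \<in> center" using step2 by auto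
      have e1: "E m l x z = F X * v + X * d v + X * v + v * X"
        by (simp add: E_def jordan_prod_def v_def X_def Fmul add.assoc)
      have pz: "ppow (z * z) l = v * v" using ppow_sq_center[OF z(1)] by (simp add: v_def)
      have e2: "E m l x (z * z) = F X * (v * v) + X * (d v * v + v * d v) + X * (v * v) + (v * v) * X"
        by (simp add: E_def jordan_prod_def pz X_def Fmul dmul add.assoc)
      have vX: "v * X = X * v" using vc by (simp add: center_def)
      have vXw: "v * (X * w) = X * (v * w)" for w
        by (metis mult.assoc vX)
      have dvv: "d v * v = v * d v" using dvc by (simp add: center_def)
      have dvvw: "d v * (v * w) = v * (d v * w)" for w
        by (metis mult.assoc dvv)
      have "E m l x z * v - E m l x (z * z) = - (X * c)"
        unfolding e1 e2 c_def by (simp add: algebra_simps vX vXw dvv dvvw)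
      moreover have "E m l x z * v - E m l x (z * z) \<in> center"
        using center_diff[OF center_mult[OF E1 vc] E2] .
      ultimately have "- (X * c) \<in> center" by simp
      then show ?thesis using center_uminus[of "- (X * c)"] by (simp add: X_def)
    qed
    have allX: "ppow x m \<in> center" for x :: 'a
    proof -
      have "c * ppow x m = ppow x m * c" using cc by (simp add: center_def)
      then have "c * ppow x m \<in> center" using key by simp
      then show ?thesis using cent_cancel[OF P cc cnz] by blast
    qed
    have yc: "y \<in> center" for y :: 'a
    proof -
      obtain C where C1: "c \<in> center \<longrightarrow> C 1 = of_nat (Suc m) *\<^sub>R mp c m y"
        and Ce: "\<forall>t. ppow (c + t *\<^sub>R y) m = (\<Sum>k\<le>Suc m. t^k *\<^sub>R C k)"
        using ppow_expand[of c m y] by blast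
      have "\<forall>t. \<bar>t\<bar> < 1 \<longrightarrow> (\<Sum>k\<le>Suc m. t^k *\<^sub>R C k) \<in> center"
        using allX Ce by metis
      from coeffs_center[OF _ this] have "C 1 \<in> center" by simp
      then have "of_nat (Suc m) *\<^sub>R mp c m y \<in> center" using C1 cc by simp
      then have "inverse (real (Suc m)) *\<^sub>R (of_nat (Suc m) *\<^sub>R mp c m y) \<in> center"
        by (rule center_scaleR)
      then have my: "mp c m y \<in> center" by simp
      show ?thesis
      proof (cases m)
        case 0 then show ?thesis using my by simp
      next
        case (Suc k)
        then have "ppow c k * y \<in> center" using my ppow_mp[OF cc] by simp
        moreover have "ppow c k \<noteq> 0" using central_nil[OF P cc] cnz by blast
        ultimately show ?thesis using cent_cancel[OF P ppow_center[OF cc]] by blast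
      qed
    qed
    have "\<forall>x y::'a. x * y = y * x" using yc by (simp add: center_def)
    then show ?thesis by simp
  qed
qed

end
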